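(* Let $k=\mathbb{F}_3$ and let $M$ be a $7\times 7$ matrix over $k$ that is self-adjoint for the bilinear form $\langle x,y\rangle=x_1y_7+x_2y_6+\dots+x_7y_1$ on $k^7$ and regular semisimple (i.e. has $7$ distinct eigenvalues in an algebraic closure of $k$). Then $M$ is not properly blockwise triangular: there is no $m\in\{1,\dots,6\}$ such that $M_{ij}=0$ for all $i>m$ and $j\le m$.
   Context: $M_{ij}$ denotes the entry in row $i$ and column $j$. Self-adjointness for this form means $M_{ij}=M_{8-j,8-i}$ for all $i,j$. *)

theory Defs
  imports "Berlekamp_Zassenhaus.Finite_Field" "Jordan_Normal_Form.Jordan_Normal_Form"
    "HOL-Algebra.Algebraic_Closure_Type"
begin

text \<open>The prime field F_3 is modelled as 'a mod_ring with 'a of class prime_card and CARD('a) = 3.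
  Matrices are Jordan_Normal_Form matrices, with 0-based indices: the paper's entry M_ij is M $$ (i-1, j-1).
  The algebraic closure of a field 'b is the type 'b alg_closure with embedding to_ac.\<close>

end

theory Submission
  imports Defs
begin


lemma sum_delta_rev:
  fixes f :: "nat \<Rightarrow> 'b::comm_ring_1"
  assumes "i < n"
  shows "(\<Sum>k\<in>{0..<n}. (if i + k = n - Suc 0 then 1 else 0) * f k) = f (n - Suc i)"
proof -
  have "(\<Sum>k\<in>{0..<n}. (if i + k = n - Suc 0 then 1 else 0) * f k) = (\<Sum>k\<in>{0..<n}. if k = n - Suc i then f k else 0)"
    by (rule sum.cong) (use assms in auto)
  also have "\<dots> = f (n - Suc i)" using assms by (simp add: sum.delta')
  finally show ?thesis .
qed

lemma sum_delta_rev2: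
  fixes f :: "nat \<Rightarrow> 'b::comm_ring_1"
  assumes "j < n"
  shows "(\<Sum>k\<in>{0..<n}. f k * (if k + j = n - Suc 0 then 1 else 0)) = f (n - Suc j)"
proof -
  have "(\<Sum>k\<in>{0..<n}. f k * (if k + j = n - Suc 0 then 1 else 0)) = (\<Sum>k\<in>{0..<n}. if k = n - Suc j then f k else 0)"
    by (rule sum.cong) (use assms in auto)
  also have "\<dots> = f (n - Suc j)" using assms by (simp add: sum.delta')
  finally show ?thesis .
qed

lemma rev_det:
  fixes Y :: "'b::comm_ring_1 mat"
  assumes Y: "Y \<in> carrier_mat n n"
  shows "det (mat n n (\<lambda>(i,j). Y $$ (n-1-j, n-1-i))) = det Y"
proof -
  define J :: "'b mat" where "J = mat n n (\<lambda>(i,j). if i + j = n - Suc 0 then 1 else 0)"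
  have J: "J \<in> carrier_mat n n" unfolding J_def by auto
  have JY: "J * transpose_mat Y = mat n n (\<lambda>(i,j). Y $$ (j, n-1-i))"
    by (rule eq_matI) (use Y in \<open>auto simp: J_def scalar_prod_def sum_delta_rev\<close>)
  have JYJ: "J * transpose_mat Y * J = mat n n (\<lambda>(i,j). Y $$ (n-1-j, n-1-i))"
    unfolding JY
    by (rule eq_matI) (use Y in \<open>auto simp: J_def scalar_prod_def sum_delta_rev2\<close>)
  have JJ: "J * J = 1\<^sub>m n"
    by (rule eq_matI) (auto simp: J_def scalar_prod_def sum_delta_rev2)
  have "det (J * transpose_mat Y * J) = det J * det (transpose_mat Y) * det J"
    using J Y by (simp add: det_mult[of _ n])
  also have "\<dots> = det (J * J) * det Y" using J Y by (simp add: det_mult[of _ n] det_transpose)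
  also have "\<dots> = det Y" using JJ by simp
  finally show ?thesis using JYJ by simp
qed

lemma key:
  fixes N :: "'b::field mat"
  assumes N: "N \<in> carrier_mat 7 7"
  and sa: "\<forall>a<7. \<forall>b<7. N $$ (a,b) = N $$ (6-b,6-a)"
  and m1: "1 \<le> m" and m3: "m \<le> 3"
  and Z: "\<forall>i<7. \<forall>j<7. m \<le> i \<and> j < m \<longrightarrow> N $$ (i,j) = 0"
  shows "card {x. eigenvalue N x} \<le> 6"
proof -
  define p where "p = 7 - 2*m"
  have p7: "m + p + m = 7" "p \<ge> 1" using m1 m3 unfolding p_def by auto
  have Z2: "\<forall>i<7. \<forall>j<7. m + p \<le> i \<and> j < m + p \<longrightarrow> N $$ (i,j) = 0"
  proof (intro allI impI)
    fix i j assume h: "i < 7" "j < 7" "m + p \<le> i \<and> j < m + p"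
    have "N $$ (i,j) = N $$ (6-j,6-i)" using h by (intro sa[rule_format]) auto
    also have "\<dots> = 0" using h p7 by (intro Z[rule_format]) auto
    finally show "N $$ (i,j) = 0" .
  qed
  define blk where "blk a s = mat s s (\<lambda>(i,j). N $$ (i+a,j+a))" for a s
  define A where "A = blk 0 m"
  define C where "C = blk m p"
  define D where "D = blk (m+p) m"
  have A: "A \<in> carrier_mat m m" and C: "C \<in> carrier_mat p p" and D: "D \<in> carrier_mat m m"
    by (auto simp: A_def C_def D_def blk_def)
  have detfac: "det (char_matrix N x) = det (char_matrix A x) * (det (char_matrix C x) * det (char_matrix D x))" for x
  proof -
    have CM: "char_matrix N x = four_block_mat (char_matrix A x) (mat m (p+m) (\<lambda>(i,j). N$$(i,j+m))) (0\<^sub>m (p+m) m)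
       (four_block_mat (char_matrix C x) (mat p m (\<lambda>(i,j). N$$(i+m,j+m+p))) (0\<^sub>m m p) (char_matrix D x))"
    proof (rule eq_matI)
      show "dim_row (char_matrix N x) = dim_row (four_block_mat (char_matrix A x) (mat m (p+m) (\<lambda>(i,j). N$$(i,j+m))) (0\<^sub>m (p+m) m)
       (four_block_mat (char_matrix C x) (mat p m (\<lambda>(i,j). N$$(i+m,j+m+p))) (0\<^sub>m m p) (char_matrix D x)))"
        using N A C D p7 by (simp add: char_matrix_def)
      show "dim_col (char_matrix N x) = dim_col (four_block_mat (char_matrix A x) (mat m (p+m) (\<lambda>(i,j). N$$(i,j+m))) (0\<^sub>m (p+m) m)
       (four_block_mat (char_matrix C x) (mat p m (\<lambda>(i,j). N$$(i+m,j+m+p))) (0\<^sub>m m p) (char_matrix D x)))"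
        using N A C D p7 by (simp add: char_matrix_def)
      fix i j assume ij: "i < dim_row (four_block_mat (char_matrix A x) (mat m (p+m) (\<lambda>(i,j). N$$(i,j+m))) (0\<^sub>m (p+m) m)
       (four_block_mat (char_matrix C x) (mat p m (\<lambda>(i,j). N$$(i+m,j+m+p))) (0\<^sub>m m p) (char_matrix D x)))"
        "j < dim_col (four_block_mat (char_matrix A x) (mat m (p+m) (\<lambda>(i,j). N$$(i,j+m))) (0\<^sub>m (p+m) m)
       (four_block_mat (char_matrix C x) (mat p m (\<lambda>(i,j). N$$(i+m,j+m+p))) (0\<^sub>m m p) (char_matrix D x)))"
      then have i7: "i < 7" and j7: "j < 7" using A C D p7 by (auto simp: char_matrix_def)
      show "char_matrix N x $$ (i, j) = four_block_mat (char_matrix A x) (mat m (p+m) (\<lambda>(i,j). N$$(i,j+m))) (0\<^sub>m (p+m) m)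
       (four_block_mat (char_matrix C x) (mat p m (\<lambda>(i,j). N$$(i+m,j+m+p))) (0\<^sub>m m p) (char_matrix D x)) $$ (i, j)"
      proof -
        have Z': "N $$ (a,b) = 0" if "a < 7" "b < 7" "m \<le> a" "b < m" for a b using that Z by auto
        have Z2': "N $$ (a,b) = 0" if "a < 7" "b < 7" "m + p \<le> a" "b < m + p" for a b using that Z2 by auto
        have cm: "char_matrix B x $$ (a,b) = B $$ (a,b) + (if a = b then - x else 0)"
          if "B \<in> carrier_mat n n" "a < n" "b < n" for B :: "'b mat" and n a b
          using that by (auto simp: char_matrix_def)
        have ev: "four_block_mat (char_matrix A x) (mat m (p+m) (\<lambda>(i,j). N$$(i,j+m))) (0\<^sub>m (p+m) m)
       (four_block_mat (char_matrix C x) (mat p m (\<lambda>(i,j). N$$(i+m,j+m+p))) (0\<^sub>m m p) (char_matrix D x)) $$ (i, j)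
          = (if i < m then if j < m then char_matrix A x $$ (i,j) else N $$ (i,j)
             else if j < m then 0 else
             if i < m + p then if j < m + p then char_matrix C x $$ (i-m,j-m) else N $$ (i,j)
             else if j < m + p then 0 else char_matrix D x $$ (i-m-p,j-m-p))"
          using i7 j7 p7 carrier_matD[OF char_matrix_closed[OF A, of x]] carrier_matD[OF char_matrix_closed[OF C, of x]]
            carrier_matD[OF char_matrix_closed[OF D, of x]] by auto
        show ?thesis
          unfolding ev
          using i7 j7 N A C D p7
          apply (subst cm[OF N], simp, simp)
          apply (cases "i < m"; cases "j < m"; cases "i < m + p"; cases "j < m + p")
          apply (simp_all add: cm[OF A] cm[OF C] cm[OF D] Z' Z2')
          apply (simp_all add: A_def C_def D_def blk_def)
          apply auto
          done
      qed
    qed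
    show ?thesis unfolding CM
      apply (subst det_four_block_mat_lower_left_zero[of _ m _ "p+m"])
      using A C D
         apply (auto intro!: det_four_block_mat_lower_left_zero[of _ p _ m])
      done
  qed
  have detD: "det (char_matrix D x) = det (char_matrix A x)" for x
  proof -
    have "char_matrix D x = mat m m (\<lambda>(i,j). (char_matrix A x) $$ (m-1-j, m-1-i))"
    proof (rule eq_matI)
      fix i j assume ij: "i < dim_row (mat m m (\<lambda>(i,j). (char_matrix A x) $$ (m-1-j, m-1-i)))"
        "j < dim_col (mat m m (\<lambda>(i,j). (char_matrix A x) $$ (m-1-j, m-1-i)))"
      then have i: "i < m" "j < m" by auto
      have "N $$ (i + (m+p), j + (m+p)) = N $$ (6 - (j+(m+p)), 6 - (i + (m+p)))"
        using i p7 by (intro sa[rule_format]) auto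
      moreover have "6 - (j+(m+p)) = m - 1 - j" "6 - (i+(m+p)) = m - 1 - i" using p7 by auto
      ultimately show "char_matrix D x $$ (i, j) = mat m m (\<lambda>(i,j). (char_matrix A x) $$ (m-1-j, m-1-i)) $$ (i, j)"
        using i A D by (auto simp: char_matrix_def A_def D_def blk_def)
    qed (use A D in \<open>auto simp: char_matrix_def\<close>)
    then show ?thesis using rev_det[of "char_matrix A x" m] A by simp
  qed
  have sub: "{x. eigenvalue N x} \<subseteq> {x. poly (char_poly A) x = 0} \<union> {x. poly (char_poly C) x = 0}"
  proof
    fix x assume "x \<in> {x. eigenvalue N x}"
    then have "det (char_matrix N x) = 0" using eigenvalue_det[OF N] by simp
    then have "det (char_matrix A x) = 0 \<or> det (char_matrix C x) = 0"
      using detfac[of x] detD[of x] by auto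
    then show "x \<in> {x. poly (char_poly A) x = 0} \<union> {x. poly (char_poly C) x = 0}"
      using eigenvalue_det[OF A] eigenvalue_det[OF C] eigenvalue_root_char_poly[OF A] eigenvalue_root_char_poly[OF C]
      by auto
  qed
  have dA: "Polynomial.degree (char_poly A) = m" and nA: "char_poly A \<noteq> 0"
    using degree_monic_char_poly[OF A] by auto
  have dC: "Polynomial.degree (char_poly C) = p" and nC: "char_poly C \<noteq> 0"
    using degree_monic_char_poly[OF C] by auto
  have fin: "finite ({x. poly (char_poly A) x = 0} \<union> {x. poly (char_poly C) x = 0})"
    using poly_roots_finite nA nC by blast
  have "card {x. eigenvalue N x} \<le> card ({x. poly (char_poly A) x = 0} \<union> {x. poly (char_poly C) x = 0})"
    by (rule card_mono[OF fin sub])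
  also have "\<dots> \<le> card {x. poly (char_poly A) x = 0} + card {x. poly (char_poly C) x = 0}"
    by (rule card_Un_le)
  also have "\<dots> \<le> m + p" using card_poly_roots_bound[OF nA] card_poly_roots_bound[OF nC] dA dC by simp
  finally show ?thesis using p7 m1 by simp
qed

theorem lemma2p5:
  fixes M :: "'a :: prime_card mod_ring mat"
  assumes card3: "CARD('a) = 3"
    and dim: "M \<in> carrier_mat 7 7"
    and selfadj: "\<forall>i\<in>{1..7}. \<forall>j\<in>{1..7}. M $$ (i - 1, j - 1) = M $$ ((8 - j) - 1, (8 - i) - 1)"
    and rss: "card {x. eigenvalue (map_mat to_ac M) x} = 7"
  shows "\<not> (\<exists>m\<in>{1..6::nat}. \<forall>i\<in>{1..7}. \<forall>j\<in>{1..7}. i > m \<and> j \<le> m \<longrightarrow> M $$ (i - 1, j - 1) = 0)"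
proof
  assume "\<exists>m\<in>{1..6::nat}. \<forall>i\<in>{1..7}. \<forall>j\<in>{1..7}. i > m \<and> j \<le> m \<longrightarrow> M $$ (i - 1, j - 1) = 0"
  then obtain m :: nat where m: "1 \<le> m" "m \<le> 6"
    and Zm: "\<forall>i\<in>{1..7}. \<forall>j\<in>{1..7}. i > m \<and> j \<le> m \<longrightarrow> M $$ (i - 1, j - 1) = 0" by auto
  define N where "N = map_mat to_ac M"
  have N: "N \<in> carrier_mat 7 7" using dim by (simp add: N_def)
  have Nij: "N $$ (a,b) = to_ac (M $$ (a,b))" if "a < 7" "b < 7" for a b
    using dim that by (simp add: N_def)
  have saM: "M $$ (a,b) = M $$ (6-b,6-a)" if "a < 7" "b < 7" for a b
  proof -
    have "M $$ ((a+1) - 1, (b+1) - 1) = M $$ ((8 - (b+1)) - 1, (8 - (a+1)) - 1)"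
      using selfadj that by (intro selfadj[rule_format]) auto
    moreover have "(8 - (b+1)) - 1 = 6 - b" "(8 - (a+1)) - 1 = 6 - a" by auto
    ultimately show ?thesis by simp
  qed
  have sa: "\<forall>a<7. \<forall>b<7. N $$ (a,b) = N $$ (6-b,6-a)"
  proof (intro allI impI)
    fix a b :: nat assume "a < 7" "b < 7"
    then show "N $$ (a,b) = N $$ (6-b,6-a)" using Nij[of a b] Nij[of "6-b" "6-a"] saM[of a b] by simp
  qed
  have Z0: "M $$ (i,j) = 0" if "i < 7" "j < 7" "m \<le> i" "j < m" for i j
  proof -
    have "M $$ ((i+1) - 1, (j+1) - 1) = 0" using that by (intro Zm[rule_format]) auto
    then show ?thesis by simp
  qed
  have "card {x. eigenvalue N x} \<le> 6"
  proof (cases "m \<le> 3")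
    case True
    show ?thesis
    proof (rule key[OF N sa m(1) True])
      show "\<forall>i<7. \<forall>j<7. m \<le> i \<and> j < m \<longrightarrow> N $$ (i,j) = 0"
        using Z0 Nij by auto
    qed
  next
    case False
    show ?thesis
    proof (rule key[OF N sa, of "7 - m"])
      show "1 \<le> 7 - m" "7 - m \<le> 3" using False m by auto
      show "\<forall>i<7. \<forall>j<7. 7 - m \<le> i \<and> j < 7 - m \<longrightarrow> N $$ (i,j) = 0"
      proof (intro allI impI)
        fix i j :: nat assume h: "i < 7" "j < 7" "7 - m \<le> i \<and> j < 7 - m"
        have "M $$ (i,j) = M $$ (6-j,6-i)" using h by (intro saM) auto
        also have "\<dots> = 0" using h m by (intro Z0) auto
        finally show "N $$ (i,j) = 0" using Nij[of i j] h by simp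
      qed
    qed
  qed
  then show False using rss unfolding N_def by simp
qed

end
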